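(* Let $n\ge1$ and $1\le k\le n$, and assume either $n$ is even, or $n$ is odd and $k\ge2$. Let $e$ be the greatest even integer with $e\le n-k+1$. Then $$\sup\{\operatorname{per}(I-A): A\in\omega_{n,k}\}=2^{e/2}\Big[1+\Big(\frac{n-k+1-e}{2}\Big)^2\Big].$$
   Context: An $n\times n$ matrix is doubly substochastic if all its entries are nonnegative and every row sum and column sum is at most $1$. $\sigma(A)$ is the sum of all entries of $A$. The sub-defect of an $n\times n$ doubly substochastic matrix $A$ is $sd(A)=\lceil n-\sigma(A)\rceil$ (equivalently, the least $k$ such that $A$ is a submatrix of some $(n+k)\times(n+k)$ doubly stochastic matrix), and $\omega_{n,k}$ is the set of $n\times n$ doubly substochastic matrices with sub-defect $k$; thus for $k\ge1$, $\omega_{n,k}=\{A: n-k\le\sigma(A)<n-k+1\}$. The permanent is $\operatorname{per}(M)=\sum_{\pi\in S_n}\prod_i m_{i\pi(i)}$, and $I$ is the identity matrix. *)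

theory Defs
  imports "HOL-Combinatorics.Permutations" Complex_Main
begin

text \<open>n x n real matrices are represented as functions nat => nat => real,
  with indices ranging over {..<n}.\<close>

definition per :: "nat \<Rightarrow> (nat \<Rightarrow> nat \<Rightarrow> real) \<Rightarrow> real" where
  "per n M = (\<Sum>p\<in>{p. p permutes {..<n}}. \<Prod>i<n. M i (p i))"

definition idm :: "nat \<Rightarrow> nat \<Rightarrow> real" where
  "idm i j = (if i = j then 1 else 0)"

definition doubly_substochastic :: "nat \<Rightarrow> (nat \<Rightarrow> nat \<Rightarrow> real) \<Rightarrow> bool" where
  "doubly_substochastic n A \<longleftrightarrow>
     (\<forall>i j. (i < n \<and> j < n \<longrightarrow> 0 \<le> A i j) \<and> (\<not> (i < n \<and> j < n) \<longrightarrow> A i j = 0)) \<and>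
     (\<forall>i<n. (\<Sum>j<n. A i j) \<le> 1) \<and>
     (\<forall>j<n. (\<Sum>i<n. A i j) \<le> 1)"

definition sigma_sum :: "nat \<Rightarrow> (nat \<Rightarrow> nat \<Rightarrow> real) \<Rightarrow> real" where
  "sigma_sum n A = (\<Sum>i<n. \<Sum>j<n. A i j)"

definition sub_defect :: "nat \<Rightarrow> (nat \<Rightarrow> nat \<Rightarrow> real) \<Rightarrow> int" where
  "sub_defect n A = \<lceil>real n - sigma_sum n A\<rceil>"

definition omega :: "nat \<Rightarrow> nat \<Rightarrow> (nat \<Rightarrow> nat \<Rightarrow> real) set" where
  "omega n k = {A. doubly_substochastic n A \<and> sub_defect n A = int k}"

end

theory Submission
  imports Defs
begin


lemma per_cong:
  assumes "\<And>i j. i < n \<Longrightarrow> j < n \<Longrightarrow> M i j = N i j"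
  shows "per n M = per n N"
  unfolding per_def
proof (rule sum.cong[OF refl])
  fix p assume "p \<in> {p. p permutes {..<n}}"
  hence p: "p permutes {..<n}" by simp
  show "(\<Prod>i<n. M i (p i)) = (\<Prod>i<n. N i (p i))"
    by (rule prod.cong[OF refl]) (use assms permutes_in_image[OF p] in auto)
qed

lemma per_0: "per 0 M = 1"
  unfolding per_def by (simp add: permutes_empty)

lemma per_row_scale: "per n (\<lambda>i j. c i * M i j) = (\<Prod>i<n. c i) * per n M"
  unfolding per_def by (simp add: prod.distrib sum_distrib_left)

lemma per_mono:
  assumes "\<And>i j. i < n \<Longrightarrow> j < n \<Longrightarrow> 0 \<le> M i j \<and> M i j \<le> N i j"
  shows "per n M \<le> per n N"
  unfolding per_def
proof (rule sum_mono)
  fix p assume "p \<in> {p. p permutes {..<n}}"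
  hence p: "p permutes {..<n}" by simp
  show "(\<Prod>i<n. M i (p i)) \<le> (\<Prod>i<n. N i (p i))"
    by (rule prod_mono) (use assms permutes_in_image[OF p] in auto)
qed

lemma per_nonneg:
  assumes "\<And>i j. i < n \<Longrightarrow> j < n \<Longrightarrow> 0 \<le> M i j"
  shows "0 \<le> per n M"
  unfolding per_def
proof (rule sum_nonneg, rule prod_nonneg)
  fix p i assume "p \<in> {p. p permutes {..<n}}" "i \<in> {..<n}"
  thus "0 \<le> M i (p i)" using assms permutes_in_image[of p "{..<n}" i] by auto
qed

lemma per_abs:
  assumes "\<And>i j. i < n \<Longrightarrow> j < n \<Longrightarrow> \<bar>M i j\<bar> \<le> N i j"
  shows "per n M \<le> per n N"
proof -
  have "per n M \<le> (\<Sum>p\<in>{p. p permutes {..<n}}. \<bar>\<Prod>i<n. M i (p i)\<bar>)"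
    unfolding per_def by (rule sum_mono) simp
  also have "\<dots> \<le> per n N"
    unfolding per_def
  proof (rule sum_mono)
    fix p assume "p \<in> {p. p permutes {..<n}}"
    hence p: "p permutes {..<n}" by simp
    show "\<bar>\<Prod>i<n. M i (p i)\<bar> \<le> (\<Prod>i<n. N i (p i))"
      unfolding abs_prod
      by (rule prod_mono) (use assms permutes_in_image[OF p] in auto)
  qed
  finally show ?thesis .
qed

lemma per_row_expand:
  "per (Suc n) M = (\<Sum>b\<le>n. M n b * per n (\<lambda>i l. if l = b then M i n else M i l))"
proof -
  have ins: "{..<Suc n} = insert n {..<n}" by auto
  have "per (Suc n) M = (\<Sum>b\<in>insert n {..<n}. \<Sum>q\<in>{p. p permutes {..<n}}.
          \<Prod>i<Suc n. M i ((transpose n b \<circ> q) i))"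
    unfolding per_def ins
    by (subst sum_over_permutations_insert) (auto simp: ins[symmetric])
  also have "\<dots> = (\<Sum>b\<le>n. M n b * per n (\<lambda>i l. if l = b then M i n else M i l))"
  proof -
    have ins2: "insert n {..<n} = {..n}" by auto
    have "\<And>b q. b \<le> n \<Longrightarrow> q permutes {..<n} \<Longrightarrow>
       (\<Prod>i<Suc n. M i ((transpose n b \<circ> q) i)) =
       M n b * (\<Prod>i<n. (if q i = b then M i n else M i (q i)))"
    proof -
      fix b q assume b: "b \<le> n" and q: "q permutes {..<n}"
      have qn: "q n = n" using q by (simp add: permutes_not_in)
      have "(\<Prod>i<Suc n. M i ((transpose n b \<circ> q) i)) =
            M n ((transpose n b \<circ> q) n) * (\<Prod>i<n. M i ((transpose n b \<circ> q) i))"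
        by (simp add: prod.lessThan_Suc mult.commute)
      also have "(\<Prod>i<n. M i ((transpose n b \<circ> q) i)) =
           (\<Prod>i<n. (if q i = b then M i n else M i (q i)))"
      proof (rule prod.cong[OF refl])
        fix i assume "i \<in> {..<n}"
        hence "q i < n" using permutes_in_image[OF q] by auto
        thus "M i ((transpose n b \<circ> q) i) = (if q i = b then M i n else M i (q i))"
          by (auto simp: transpose_def)
      qed
      finally show "(\<Prod>i<Suc n. M i ((transpose n b \<circ> q) i)) =
       M n b * (\<Prod>i<n. (if q i = b then M i n else M i (q i)))" by (simp add: qn)
    qed
    hence "\<And>b. b \<le> n \<Longrightarrow> (\<Sum>q\<in>{p. p permutes {..<n}}. \<Prod>i<Suc n. M i ((transpose n b \<circ> q) i))
        = M n b * per n (\<lambda>i l. if l = b then M i n else M i l)"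
      unfolding per_def by (simp add: sum_distrib_left)
    thus ?thesis unfolding ins2 by (rule sum.cong[OF refl]) simp
  qed
  finally show ?thesis .
qed



lemma prod_ge_lin:
  fixes x y :: "nat \<Rightarrow> real"
  assumes "finite I" "\<And>i. i \<in> I \<Longrightarrow> 0 \<le> x i" "\<And>i. i \<in> I \<Longrightarrow> 0 \<le> y i"
  shows "(\<Prod>i\<in>I. x i) + (\<Sum>k\<in>I. y k * (\<Prod>i\<in>I-{k}. x i)) \<le> (\<Prod>i\<in>I. x i + y i)"
  using assms
proof (induction I rule: finite_induct)
  case empty
  then show ?case by simp
next
  case (insert a I)
  have xa: "0 \<le> x a" and ya: "0 \<le> y a" using insert by auto
  have IH: "(\<Prod>i\<in>I. x i) + (\<Sum>k\<in>I. y k * (\<Prod>i\<in>I-{k}. x i)) \<le> (\<Prod>i\<in>I. x i + y i)"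
    using insert by auto
  have px: "0 \<le> (\<Prod>i\<in>I. x i)" using insert by (auto intro: prod_nonneg)
  have ps: "0 \<le> (\<Sum>k\<in>I. y k * (\<Prod>i\<in>I-{k}. x i))"
    using insert by (auto intro!: sum_nonneg mult_nonneg_nonneg prod_nonneg)
  have s1: "(\<Sum>k\<in>insert a I. y k * (\<Prod>i\<in>insert a I-{k}. x i)) =
     y a * (\<Prod>i\<in>I. x i) + x a * (\<Sum>k\<in>I. y k * (\<Prod>i\<in>I-{k}. x i))"
  proof -
    have "(\<Sum>k\<in>insert a I. y k * (\<Prod>i\<in>insert a I-{k}. x i)) =
      y a * (\<Prod>i\<in>insert a I-{a}. x i) + (\<Sum>k\<in>I. y k * (\<Prod>i\<in>insert a I-{k}. x i))"
      using insert by simp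
    also have "(\<Prod>i\<in>insert a I-{a}. x i) = (\<Prod>i\<in>I. x i)"
      using insert by (metis Diff_insert_absorb)
    also have "(\<Sum>k\<in>I. y k * (\<Prod>i\<in>insert a I-{k}. x i)) = (\<Sum>k\<in>I. y k * (x a * (\<Prod>i\<in>I-{k}. x i)))"
    proof (rule sum.cong[OF refl])
      fix k assume k: "k \<in> I"
      have "insert a I - {k} = insert a (I - {k})" using k insert by auto
      thus "y k * (\<Prod>i\<in>insert a I-{k}. x i) = y k * (x a * (\<Prod>i\<in>I-{k}. x i))"
        using insert by simp
    qed
    finally show ?thesis by (simp add: sum_distrib_left algebra_simps)
  qed
  have "(\<Prod>i\<in>insert a I. x i) + (\<Sum>k\<in>insert a I. y k * (\<Prod>i\<in>insert a I-{k}. x i))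
     = x a * ((\<Prod>i\<in>I. x i) + (\<Sum>k\<in>I. y k * (\<Prod>i\<in>I-{k}. x i))) + y a * (\<Prod>i\<in>I. x i)"
    using insert s1 by (simp add: algebra_simps)
  also have "\<dots> \<le> (x a + y a) * (\<Prod>i\<in>I. x i + y i)"
  proof -
    have "x a * ((\<Prod>i\<in>I. x i) + (\<Sum>k\<in>I. y k * (\<Prod>i\<in>I-{k}. x i))) \<le> x a * (\<Prod>i\<in>I. x i + y i)"
      using IH xa by (rule mult_left_mono)
    moreover have "y a * (\<Prod>i\<in>I. x i) \<le> y a * (\<Prod>i\<in>I. x i + y i)"
      using IH ps ya by (intro mult_left_mono) auto
    ultimately show ?thesis by (simp add: algebra_simps)
  qed
  also have "\<dots> = (\<Prod>i\<in>insert a I. x i + y i)" using insert by simp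
  finally show ?case .
qed

lemma per_rank1:
  fixes M :: "nat \<Rightarrow> nat \<Rightarrow> real"
  assumes M: "\<And>i j. i < n \<Longrightarrow> j < n \<Longrightarrow> 0 \<le> M i j"
    and u: "\<And>i. i < n \<Longrightarrow> 0 \<le> u i" and v: "\<And>i. i < n \<Longrightarrow> 0 \<le> v i"
  shows "per n M + (\<Sum>j<n. v j * per n (\<lambda>i l. if l = j then u i else M i l))
         \<le> per n (\<lambda>i l. M i l + u i * v l)"
proof -
  have key: "\<And>q. q permutes {..<n} \<Longrightarrow>
     (\<Prod>i<n. M i (q i)) + (\<Sum>j<n. v j * (\<Prod>i<n. (if q i = j then u i else M i (q i))))
     \<le> (\<Prod>i<n. M i (q i) + u i * v (q i))"
  proof -
    fix q assume q: "q permutes {..<n}"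
    have qi: "\<And>i. i < n \<Longrightarrow> q i < n" using permutes_in_image[OF q] by auto
    have "(\<Sum>j<n. v j * (\<Prod>i<n. (if q i = j then u i else M i (q i))))
        = (\<Sum>k<n. v (q k) * (\<Prod>i<n. (if q i = q k then u i else M i (q i))))"
    proof -
      have "(\<Sum>j\<in>q ` {..<n}. v j * (\<Prod>i<n. (if q i = j then u i else M i (q i))))
        = (\<Sum>k<n. v (q k) * (\<Prod>i<n. (if q i = q k then u i else M i (q i))))"
        by (rule sum.reindex_cong[OF permutes_inj_on[OF q] refl]) simp
      thus ?thesis using permutes_image[OF q] by simp
    qed
    also have "\<dots> = (\<Sum>k<n. (u k * v (q k)) * (\<Prod>i\<in>{..<n}-{k}. M i (q i)))"
    proof (rule sum.cong[OF refl])
      fix k assume k: "k \<in> {..<n}"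
      have "(\<Prod>i<n. (if q i = q k then u i else M i (q i))) =
            (if q k = q k then u k else M k (q k)) * (\<Prod>i\<in>{..<n}-{k}. (if q i = q k then u i else M i (q i)))"
        using k by (simp add: prod.remove)
      also have "(\<Prod>i\<in>{..<n}-{k}. (if q i = q k then u i else M i (q i))) = (\<Prod>i\<in>{..<n}-{k}. M i (q i))"
        by (rule prod.cong[OF refl]) (use permutes_inj[OF q] in \<open>auto dest: injD\<close>)
      finally show "v (q k) * (\<Prod>i<n. (if q i = q k then u i else M i (q i))) =
           (u k * v (q k)) * (\<Prod>i\<in>{..<n}-{k}. M i (q i))" by simp
    qed
    finally have eq: "(\<Sum>j<n. v j * (\<Prod>i<n. (if q i = j then u i else M i (q i)))) =
        (\<Sum>k<n. (u k * v (q k)) * (\<Prod>i\<in>{..<n}-{k}. M i (q i)))" .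
    show "(\<Prod>i<n. M i (q i)) + (\<Sum>j<n. v j * (\<Prod>i<n. (if q i = j then u i else M i (q i))))
     \<le> (\<Prod>i<n. M i (q i) + u i * v (q i))"
      unfolding eq
      by (rule prod_ge_lin) (auto intro!: M u v mult_nonneg_nonneg qi)
  qed
  have "per n M + (\<Sum>j<n. v j * per n (\<lambda>i l. if l = j then u i else M i l)) =
     (\<Sum>q\<in>{p. p permutes {..<n}}. (\<Prod>i<n. M i (q i)) + (\<Sum>j<n. v j * (\<Prod>i<n. (if q i = j then u i else M i (q i)))))"
    unfolding per_def by (simp add: sum.distrib sum_distrib_left sum.swap[of _ "{..<n}"])
  also have "\<dots> \<le> per n (\<lambda>i l. M i l + u i * v l)"
    unfolding per_def by (rule sum_mono) (use key in auto)
  finally show ?thesis .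
qed



lemma sum_prod_le:
  fixes u v :: "nat \<Rightarrow> real"
  assumes "\<And>i. i < n \<Longrightarrow> 0 \<le> u i" "\<And>i. i < n \<Longrightarrow> 0 \<le> v i"
  shows "(\<Sum>i<n. u i * v i) \<le> (\<Sum>i<n. u i) * (\<Sum>i<n. v i)"
proof -
  have "(\<Sum>i<n. u i * v i) \<le> (\<Sum>i<n. u i * (\<Sum>j<n. v j))"
  proof (rule sum_mono)
    fix i assume i: "i \<in> {..<n}"
    have "v i \<le> (\<Sum>j<n. v j)" by (rule member_le_sum) (use i assms in auto)
    thus "u i * v i \<le> u i * (\<Sum>j<n. v j)" using i assms by (auto intro: mult_left_mono)
  qed
  thus ?thesis by (simp add: sum_distrib_right)
qed

lemma Q_step:
  fixes D r c u v P :: real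
  assumes "0 \<le> D" "D \<le> r * c" "0 \<le> r" "r \<le> 1" "0 \<le> c" "c \<le> 1" "0 \<le> u" "0 \<le> v"
    and "P \<le> 1 + D + (r * c - D)^2 / 4"
  shows "P * (1 + u * v) \<le> 1 + (D + u * v) + ((r + v) * (c + u) - (D + u * v))^2 / 4"
proof -
  define Y where "Y = r * c - D"
  have Y0: "0 \<le> Y" "Y \<le> 1" using assms unfolding Y_def by (auto intro: order_trans[of _ "r*c"] mult_le_one)
  have uv: "0 \<le> u * v" using assms by simp
  have amgm: "4 * (r * c) * (u * v) \<le> (r * u + c * v)^2"
    using sum_squares_ge_zero[of "r*u - c*v" 0] by (simp add: power2_eq_square algebra_simps)
  have "P * (1 + u * v) \<le> (1 + D + Y^2/4) * (1 + u * v)"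
    using assms uv unfolding Y_def by (intro mult_right_mono) auto
  also have "\<dots> \<le> 1 + (D + u * v) + (Y + (r * u + c * v))^2 / 4"
  proof -
    have F1: "u * v * (Y^2 / 4) \<le> u * v * Y"
    proof -
      have "Y * Y \<le> 4 * Y" using Y0 by (intro mult_right_mono) auto
      hence "Y^2/4 \<le> Y" by (simp add: power2_eq_square)
      thus ?thesis using uv by (rule mult_left_mono)
    qed
    have F3: "0 \<le> Y * (r * u + c * v)" using Y0 assms by simp
    have rc: "r * c = D + Y" unfolding Y_def by simp
    have "(1 + D + Y^2/4) * (1 + u * v) = 1 + D + Y^2/4 + u*v + (u*v*D + u * v * (Y^2 / 4))"
      by (simp add: algebra_simps)
    also have "\<dots> \<le> 1 + D + Y^2/4 + u*v + (u*v*D + u * v * Y)" using F1 by simp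
    also have "u*v*D + u * v * Y = 4 * (r * c) * (u * v) / 4" unfolding rc by (simp add: algebra_simps)
    also have "1 + D + Y^2/4 + u*v + 4 * (r * c) * (u * v) / 4 \<le> 1 + D + Y^2/4 + u*v + (r * u + c * v)^2/4"
      using amgm by simp
    also have "\<dots> \<le> 1 + D + Y^2/4 + u*v + (r * u + c * v)^2/4 + Y * (r * u + c * v) / 2"
      using F3 by simp
    also have "\<dots> = 1 + (D + u * v) + (Y + (r * u + c * v))^2 / 4"
      by (simp add: power2_eq_square field_simps)
    finally show ?thesis .
  qed
  also have "Y + (r * u + c * v) = (r + v) * (c + u) - (D + u * v)"
    unfolding Y_def by (simp add: algebra_simps)
  finally show ?thesis .
qed



lemma Q_lemma:
  fixes u v :: "nat \<Rightarrow> real"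
  shows "(\<forall>i<n. 0 \<le> u i) \<longrightarrow> (\<forall>i<n. 0 \<le> v i) \<longrightarrow> (\<Sum>i<n. u i) \<le> 1 \<longrightarrow> (\<Sum>i<n. v i) \<le> 1 \<longrightarrow>
    (\<Prod>i<n. 1 + u i * v i) \<le> 1 + (\<Sum>i<n. u i * v i)
       + ((\<Sum>i<n. v i) * (\<Sum>i<n. u i) - (\<Sum>i<n. u i * v i))^2 / 4"
proof (induction n)
  case 0
  then show ?case by simp
next
  case (Suc n)
  show ?case
  proof (intro impI)
    assume u: "\<forall>i<Suc n. 0 \<le> u i" and v: "\<forall>i<Suc n. 0 \<le> v i"
      and su: "(\<Sum>i<Suc n. u i) \<le> 1" and sv: "(\<Sum>i<Suc n. v i) \<le> 1"
    have u': "\<forall>i<n. 0 \<le> u i" and v': "\<forall>i<n. 0 \<le> v i" using u v by auto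
    have c0: "0 \<le> (\<Sum>i<n. u i)" using u' by (auto intro: sum_nonneg)
    have r0: "0 \<le> (\<Sum>i<n. v i)" using v' by (auto intro: sum_nonneg)
    have c1: "(\<Sum>i<n. u i) \<le> 1" using su u[rule_format, of n] by simp
    have r1: "(\<Sum>i<n. v i) \<le> 1" using sv v[rule_format, of n] by simp
    have D0: "0 \<le> (\<Sum>i<n. u i * v i)" using u' v' by (auto intro: sum_nonneg)
    have Drc: "(\<Sum>i<n. u i * v i) \<le> (\<Sum>i<n. v i) * (\<Sum>i<n. u i)"
      using sum_prod_le[of n u v] u' v' by (simp add: mult.commute)
    have IH: "(\<Prod>i<n. 1 + u i * v i) \<le> 1 + (\<Sum>i<n. u i * v i)
       + ((\<Sum>i<n. v i) * (\<Sum>i<n. u i) - (\<Sum>i<n. u i * v i))^2 / 4"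
      using Suc.IH u' v' c1 r1 by blast
    show "(\<Prod>i<Suc n. 1 + u i * v i) \<le> 1 + (\<Sum>i<Suc n. u i * v i)
       + ((\<Sum>i<Suc n. v i) * (\<Sum>i<Suc n. u i) - (\<Sum>i<Suc n. u i * v i))^2 / 4"
      using Q_step[OF D0 Drc r0 r1 c0 c1 _ _ IH, of "u n" "v n"] u v by simp
  qed
qed

definition hh :: "real \<Rightarrow> real" where
  "hh s = 2 ^ nat \<lfloor>s/2\<rfloor> * (1 + ((s - 2 * of_int \<lfloor>s/2\<rfloor>)/2)^2)"

lemma hh_eq:
  assumes "0 \<le> t" "t < 2"
  shows "hh (2 * of_nat j + t) = 2 ^ j * (1 + (t/2)^2)"
proof -
  have "\<lfloor>(2 * of_nat j + t)/2\<rfloor> = int j"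
    using assms by (intro floor_unique) auto
  thus ?thesis unfolding hh_def by simp
qed

lemma hh_decomp:
  fixes s :: real
  assumes "0 \<le> s"
  obtains j t where "s = 2 * of_nat j + t" "0 \<le> t" "t < 2"
proof -
  define j where "j = nat \<lfloor>s/2\<rfloor>"
  have "of_int \<lfloor>s/2\<rfloor> = real j" unfolding j_def using assms by simp
  moreover have "of_int \<lfloor>s/2\<rfloor> \<le> s/2" "s/2 < of_int \<lfloor>s/2\<rfloor> + 1" by linarith+
  ultimately show ?thesis using that[of j "s - 2 * real j"] by auto
qed

lemma hh_small:
  assumes "0 \<le> s" "s \<le> 2"
  shows "hh s = 1 + s^2/4"
proof (cases "s = 2")
  case True
  have "hh (2 * of_nat 1 + 0) = 2 ^ 1 * (1 + (0/2)^2)" by (rule hh_eq) auto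
  thus ?thesis using True by simp
next
  case False
  hence "hh (2 * of_nat 0 + s) = 2 ^ 0 * (1 + (s/2)^2)" using assms by (intro hh_eq) auto
  thus ?thesis by (simp add: power2_eq_square)
qed

lemma hh_ge1:
  assumes "0 \<le> s" shows "1 \<le> hh s"
proof -
  obtain j t where x: "s = 2 * of_nat j + t" "0 \<le> t" "t < 2" using hh_decomp assms by blast
  have a: "1 \<le> (2::real)^j" by simp
  have b: "1 \<le> 1 + (t/2)^2" by simp
  have "1 * 1 \<le> (2::real)^j * (1 + (t/2)^2)" using a b by (intro mult_mono) auto
  thus ?thesis using x hh_eq by simp
qed

lemma hh_mono:
  assumes "0 \<le> x" "x \<le> y"
  shows "hh x \<le> hh y"
proof -
  obtain j t where x: "x = 2 * of_nat j + t" "0 \<le> t" "t < 2" using hh_decomp assms by blast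
  have y0: "0 \<le> y" using assms by linarith
  obtain j' t' where y: "y = 2 * of_nat j' + t'" "0 \<le> t'" "t' < 2" using hh_decomp[OF y0] by blast
  have hx: "hh x = 2 ^ j * (1 + (t/2)^2)" using x hh_eq by simp
  have hy: "hh y = 2 ^ j' * (1 + (t'/2)^2)" using y hh_eq by simp
  have "j \<le> j'"
  proof (rule ccontr)
    assume "\<not> j \<le> j'"
    hence "real j' + 1 \<le> real j" by simp
    thus False using x y assms by linarith
  qed
  show ?thesis
  proof (cases "j = j'")
    case True
    hence "real j = real j'" by simp
    hence tt: "t \<le> t'" using x(1) y(1) assms by linarith
    have "t/2 \<le> t'/2" using tt by simp
    hence "(t/2)^2 \<le> (t'/2)^2" by (rule power_mono) (use x(2) in simp)
    thus ?thesis unfolding hx hy True by simp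
  next
    case False
    hence sj: "Suc j \<le> j'" using \<open>j \<le> j'\<close> by simp
    have "t/2 \<le> 1" using x by simp
    hence "(t/2)^2 \<le> 1" using x(2) by (simp add: power_le_one)
    hence "hh x \<le> 2 ^ j * 2" unfolding hx by simp
    also have "\<dots> = 2 ^ Suc j" by simp
    also have "(2::real) ^ Suc j \<le> 2 ^ j'" using sj by (rule power_increasing) simp
    also have "(2::real) ^ j' \<le> hh y" unfolding hy by simp
    finally show ?thesis .
  qed
qed

lemma hh_super:
  assumes "0 \<le> x" "0 \<le> d" "d \<le> 2"
  shows "hh x * hh d \<le> hh (x + d)"
proof -
  obtain j t where x: "x = 2 * of_nat j + t" "0 \<le> t" "t < 2" using hh_decomp assms by blast
  have hx: "hh x = 2 ^ j * (1 + (t/2)^2)" using x hh_eq by simp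
  have hd: "hh d = 1 + d^2/4" using hh_small assms by simp
  show ?thesis
  proof (cases "t + d < 2")
    case True
    have "hh (x + d) = hh (2 * of_nat j + (t + d))" using x by (simp add: algebra_simps)
    also have "\<dots> = 2 ^ j * (1 + ((t+d)/2)^2)" using True x assms by (intro hh_eq) auto
    finally have e: "hh (x + d) = 2 ^ j * (1 + ((t+d)/2)^2)" .
    have "(1 + (t/2)^2) * (1 + d^2/4) \<le> 1 + ((t+d)/2)^2"
    proof -
      have td: "t * d \<le> 2 * 2" using x assms by (intro mult_mono) auto
      have td0: "0 \<le> t * d" using x assms by simp
      have "(t*d)*(t*d) \<le> 8 * (t * d)" using td td0 by (intro mult_right_mono) auto
      moreover have "(1 + (t/2)^2) * (1 + d^2/4) = 1 + t^2/4 + d^2/4 + (t*d)*(t*d)/16"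
        by (simp add: power2_eq_square algebra_simps)
      moreover have "1 + ((t+d)/2)^2 = 1 + t^2/4 + d^2/4 + (t*d)/2"
        by (simp add: power2_eq_square algebra_simps add_divide_distrib)
      ultimately show ?thesis by linarith
    qed
    thus ?thesis unfolding hx hd e by simp
  next
    case False
    have "hh (x + d) = hh (2 * of_nat (Suc j) + (t + d - 2))" using x by (simp add: algebra_simps)
    also have "\<dots> = 2 ^ Suc j * (1 + ((t+d-2)/2)^2)" using False x assms by (intro hh_eq) auto
    finally have e: "hh (x + d) = 2 ^ Suc j * (1 + ((t+d-2)/2)^2)" .
    have "(1 + (t/2)^2) * (1 + d^2/4) \<le> 2 * (1 + ((t+d-2)/2)^2)"
    proof -
      define a where "a = 2 - t"
      define b where "b = 2 - d"
      have ab: "0 \<le> a" "0 \<le> b" "a + b \<le> 2" "a \<le> 2" "b \<le> 2" using x assms False unfolding a_def b_def by auto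
      have "(4 + t^2) * (4 + d^2) \<le> 8 * (4 + (t + d - 2)^2)"
      proof -
        have t: "t = 2 - a" and d: "d = 2 - b" unfolding a_def b_def by auto
        have "0 \<le> a * b * (4*(a+b) - a*b)"
        proof -
          have "a * b \<le> 2 * b" using ab by (intro mult_right_mono) auto
          moreover have "2 * b \<le> 4*(a+b)" using ab by simp
          ultimately have "a*b \<le> 4*(a+b)" by (rule order_trans)
          thus ?thesis using ab by (intro mult_nonneg_nonneg) auto
        qed
        moreover have "8 * (4 + (t + d - 2)^2) - (4 + t^2) * (4 + d^2) = a * b * (4*(a+b) - a*b)"
          unfolding t d by (simp add: power2_eq_square algebra_simps)
        ultimately show ?thesis by linarith
      qed
      moreover have "(1 + (t/2)^2) * (1 + d^2/4) = (4 + t^2) * (4 + d^2) / 16"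
        by (simp add: power2_eq_square algebra_simps)
      moreover have "2 * (1 + ((t+d-2)/2)^2) = 8 * (4 + (t + d - 2)^2) / 16"
        by (simp add: power_divide)
      ultimately show ?thesis by (simp add: divide_right_mono)
    qed
    thus ?thesis unfolding hx hd e by simp
  qed
qed



lemma delta_bound:
  fixes r c D :: real
  assumes "0 \<le> r" "r \<le> 1" "0 \<le> c" "c \<le> 1" "0 \<le> D" "D \<le> r * c"
  shows "1 + D + (r * c - D)^2 / 4 \<le> 1 + (c + r - r * c + D)^2 / 4"
proof -
  have id: "(c + r - r * c + D)^2 - (r * c - D)^2 - 4 * D = (r - c)^2 + 2 * (r * c - D) * (2 - r - c)"
    by (simp add: power2_eq_square algebra_simps)
  have "0 \<le> (r - c)^2 + 2 * (r * c - D) * (2 - r - c)"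
    using assms by (intro add_nonneg_nonneg mult_nonneg_nonneg) auto
  hence "4 * D + (r * c - D)^2 \<le> (c + r - r * c + D)^2" using id by linarith
  thus ?thesis by (simp add: divide_right_mono)
qed

definition DSS0 :: "nat \<Rightarrow> (nat \<Rightarrow> nat \<Rightarrow> real) \<Rightarrow> bool" where
  "DSS0 n A \<longleftrightarrow> (\<forall>i<n. \<forall>j<n. 0 \<le> A i j) \<and> (\<forall>i<n. A i i = 0) \<and>
     (\<forall>i<n. (\<Sum>j<n. A i j) \<le> 1) \<and> (\<forall>j<n. (\<Sum>i<n. A i j) \<le> 1)"

lemma sum_if_diag:
  fixes g :: "nat \<Rightarrow> real"
  assumes "i < n"
  shows "(\<Sum>l<n. if i = l then 0 else g l) = (\<Sum>l<n. g l) - g i"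
proof -
  have "(\<Sum>l<n. if i = l then 0 else g l) = (\<Sum>l<n. g l - (if i = l then g l else 0))"
    by (rule sum.cong) auto
  also have "\<dots> = (\<Sum>l<n. g l) - g i" using assms by (simp add: sum_subtractf)
  finally show ?thesis .
qed

lemma main_ineq:
  "\<forall>A. DSS0 n A \<longrightarrow> per n (\<lambda>i j. idm i j + A i j) \<le> hh (\<Sum>i<n. \<Sum>j<n. A i j)"
proof (induction n)
  case 0
  then show ?case by (simp add: per_0 hh_small)
next
  case (Suc n)
  show ?case
  proof (intro allI impI)
    fix A assume A: "DSS0 (Suc n) A"
    have A0: "\<And>i j. i < Suc n \<Longrightarrow> j < Suc n \<Longrightarrow> 0 \<le> A i j" using A unfolding DSS0_def by auto
    have Ad: "\<And>i. i < Suc n \<Longrightarrow> A i i = 0" using A unfolding DSS0_def by auto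
    have Ar: "\<And>i. i < Suc n \<Longrightarrow> (\<Sum>j<Suc n. A i j) \<le> 1" using A unfolding DSS0_def by auto
    have Ac: "\<And>j. j < Suc n \<Longrightarrow> (\<Sum>i<Suc n. A i j) \<le> 1" using A unfolding DSS0_def by auto
    define u where "u i = A i n" for i
    define v where "v j = A n j" for j
    define d where "d i = u i * v i" for i
    define A' where "A' i l = (if i = l then 0 else A i l + u i * v l)" for i l
    define c where "c = (\<Sum>i<n. u i)"
    define r where "r = (\<Sum>i<n. v i)"
    define D where "D = (\<Sum>i<n. u i * v i)"
    define S0 where "S0 = (\<Sum>i<n. \<Sum>j<n. A i j)"
    have u0: "\<And>i. i < n \<Longrightarrow> 0 \<le> u i" unfolding u_def using A0 by auto
    have v0: "\<And>i. i < n \<Longrightarrow> 0 \<le> v i" unfolding v_def using A0 by auto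
    have c0: "0 \<le> c" unfolding c_def using u0 by (auto intro: sum_nonneg)
    have r0: "0 \<le> r" unfolding r_def using v0 by (auto intro: sum_nonneg)
    have c1: "c \<le> 1"
    proof -
      have "(\<Sum>i<Suc n. A i n) \<le> 1" using Ac by simp
      thus ?thesis unfolding c_def u_def using A0[of n n] by simp
    qed
    have r1: "r \<le> 1"
    proof -
      have "(\<Sum>j<Suc n. A n j) \<le> 1" using Ar by simp
      thus ?thesis unfolding r_def v_def using A0[of n n] by simp
    qed
    have D0: "0 \<le> D" unfolding D_def using u0 v0 by (auto intro!: sum_nonneg)
    have Drc: "D \<le> r * c" unfolding D_def r_def c_def
      using sum_prod_le[of n u v] u0 v0 by (simp add: mult.commute)
    have "per (Suc n) (\<lambda>i j. idm i j + A i j) = (\<Sum>b\<le>n. (idm n b + A n b) *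
        per n (\<lambda>i l. if l = b then idm i n + A i n else idm i l + A i l))"
      by (rule per_row_expand)
    also have "\<dots> = per n (\<lambda>i j. idm i j + A i j) +
        (\<Sum>b<n. v b * per n (\<lambda>i l. if l = b then u i else idm i l + A i l))"
    proof -
      have "(\<Sum>b\<le>n. (idm n b + A n b) * per n (\<lambda>i l. if l = b then idm i n + A i n else idm i l + A i l))
        = (\<Sum>b<n. (idm n b + A n b) * per n (\<lambda>i l. if l = b then idm i n + A i n else idm i l + A i l))
          + (idm n n + A n n) * per n (\<lambda>i l. if l = n then idm i n + A i n else idm i l + A i l)"
        by (simp add: lessThan_Suc_atMost[symmetric])
      also have "(idm n n + A n n) * per n (\<lambda>i l. if l = n then idm i n + A i n else idm i l + A i l)
          = per n (\<lambda>i j. idm i j + A i j)"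
        using Ad[of n] by (simp add: idm_def) (rule per_cong, auto simp: idm_def)
      also have "(\<Sum>b<n. (idm n b + A n b) * per n (\<lambda>i l. if l = b then idm i n + A i n else idm i l + A i l))
          = (\<Sum>b<n. v b * per n (\<lambda>i l. if l = b then u i else idm i l + A i l))"
      proof (rule sum.cong[OF refl])
        fix b assume b: "b \<in> {..<n}"
        have "per n (\<lambda>i l. if l = b then idm i n + A i n else idm i l + A i l)
            = per n (\<lambda>i l. if l = b then u i else idm i l + A i l)"
          by (rule per_cong) (auto simp: idm_def u_def)
        thus "(idm n b + A n b) * per n (\<lambda>i l. if l = b then idm i n + A i n else idm i l + A i l)
            = v b * per n (\<lambda>i l. if l = b then u i else idm i l + A i l)"
          using b by (simp add: idm_def v_def)
      qed
      finally show ?thesis by simp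
    qed
    also have "\<dots> \<le> per n (\<lambda>i l. (idm i l + A i l) + u i * v l)"
      by (rule per_rank1) (auto simp: idm_def Ad intro!: A0 u0 v0)
    also have "\<dots> \<le> per n (\<lambda>i l. (1 + d i) * (idm i l + A' i l))"
    proof (rule per_mono)
      fix i l assume il: "i < n" "l < n"
      have "0 \<le> u i * v l" using il u0 v0 by simp
      moreover have "0 \<le> d i" unfolding d_def using il u0 v0 by simp
      moreover have "0 \<le> A i l" using il A0 by simp
      ultimately show "0 \<le> idm i l + A i l + u i * v l \<and>
          idm i l + A i l + u i * v l \<le> (1 + d i) * (idm i l + A' i l)"
        using Ad[of i] il u0[OF il(1)] v0[OF il(1)] v0[OF il(2)] unfolding A'_def d_def idm_def
        by (auto simp: algebra_simps intro!: add_nonneg_nonneg mult_nonneg_nonneg)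
    qed
    also have "\<dots> = (\<Prod>i<n. 1 + d i) * per n (\<lambda>i l. idm i l + A' i l)"
      by (rule per_row_scale)
    also have "\<dots> \<le> (\<Prod>i<n. 1 + d i) * hh (\<Sum>i<n. \<Sum>j<n. A' i j)"
    proof (rule mult_left_mono)
      have "DSS0 n A'"
        unfolding DSS0_def
      proof (intro conjI allI impI)
        fix i j assume "i < n" "j < n"
        thus "0 \<le> A' i j" unfolding A'_def using A0 u0 v0 by auto
      next
        fix i assume "i < n" thus "A' i i = 0" unfolding A'_def by simp
      next
        fix i assume i: "i < n"
        have "(\<Sum>j<n. A' i j) \<le> (\<Sum>j<n. A i j + u i * v j)"
          by (rule sum_mono) (use i A0 u0 v0 in \<open>auto simp: A'_def\<close>)
        also have "\<dots> = (\<Sum>j<n. A i j) + u i * r" unfolding r_def by (simp add: sum.distrib sum_distrib_left)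
        also have "\<dots> \<le> (\<Sum>j<n. A i j) + u i" using r1 u0[OF i] by (simp add: mult_left_le)
        also have "\<dots> = (\<Sum>j<Suc n. A i j)" unfolding u_def by simp
        also have "\<dots> \<le> 1" using Ar i by simp
        finally show "(\<Sum>j<n. A' i j) \<le> 1" .
      next
        fix j assume j: "j < n"
        have "(\<Sum>i<n. A' i j) \<le> (\<Sum>i<n. A i j + u i * v j)"
          by (rule sum_mono) (use j A0 u0 v0 in \<open>auto simp: A'_def\<close>)
        also have "\<dots> = (\<Sum>i<n. A i j) + c * v j" unfolding c_def by (simp add: sum.distrib sum_distrib_right)
        also have "\<dots> \<le> (\<Sum>i<n. A i j) + v j" using c1 c0 v0[OF j] by (simp add: mult_left_le_one_le)
        also have "\<dots> = (\<Sum>i<Suc n. A i j)" unfolding v_def by simp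
        also have "\<dots> \<le> 1" using Ac j by simp
        finally show "(\<Sum>i<n. A' i j) \<le> 1" .
      qed
      thus "per n (\<lambda>i l. idm i l + A' i l) \<le> hh (\<Sum>i<n. \<Sum>j<n. A' i j)" using Suc.IH by blast
      show "0 \<le> (\<Prod>i<n. 1 + d i)" unfolding d_def using u0 v0 by (auto intro!: prod_nonneg add_nonneg_nonneg)
    qed
    also have "\<dots> \<le> hh (\<Sum>i<Suc n. \<Sum>j<Suc n. A i j)"
    proof -
      define \<delta> where "\<delta> = c + r - r * c + D"
      have sig': "(\<Sum>i<n. \<Sum>j<n. A' i j) = S0 + r * c - D"
      proof -
        have "(\<Sum>i<n. \<Sum>j<n. A' i j) = (\<Sum>i<n. (\<Sum>j<n. A i j + u i * v j) - (A i i + u i * v i))"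
          unfolding A'_def by (rule sum.cong[OF refl]) (simp add: sum_if_diag)
        also have "\<dots> = (\<Sum>i<n. (\<Sum>j<n. A i j) + u i * r - u i * v i)"
          by (rule sum.cong[OF refl]) (simp add: Ad sum.distrib sum_distrib_left r_def)
        also have "\<dots> = S0 + r * c - D"
          unfolding S0_def D_def c_def by (simp add: sum.distrib sum_subtractf sum_distrib_left sum_distrib_right mult.commute)
        finally show ?thesis .
      qed
      have sig: "(\<Sum>i<Suc n. \<Sum>j<Suc n. A i j) = S0 + c + r"
        unfolding S0_def c_def r_def u_def v_def using Ad[of n] by (simp add: sum.distrib)
      have S00: "0 \<le> S0" unfolding S0_def using A0 by (auto intro!: sum_nonneg)
      have sp0: "0 \<le> S0 + r * c - D" using S00 Drc by simp
      have "r * c \<le> r" using r0 c1 by (rule mult_right_le_one_le[OF _ c0])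
      hence d0: "0 \<le> \<delta>" unfolding \<delta>_def using c0 D0 by linarith
      have d2: "\<delta> \<le> 2" unfolding \<delta>_def using c1 r1 Drc by simp
      have "(\<Prod>i<n. 1 + d i) \<le> 1 + D + (r * c - D)^2 / 4"
        using Q_lemma[of n u v] u0 v0 c1 r1 unfolding d_def D_def r_def c_def by blast
      also have "\<dots> \<le> 1 + \<delta>^2/4" unfolding \<delta>_def by (rule delta_bound; fact)
      also have "\<dots> = hh \<delta>" using hh_small d0 d2 by simp
      finally have P: "(\<Prod>i<n. 1 + d i) \<le> hh \<delta>" .
      have "(\<Prod>i<n. 1 + d i) * hh (S0 + r * c - D) \<le> hh \<delta> * hh (S0 + r * c - D)"
        using P hh_ge1[OF sp0] by (intro mult_right_mono) auto
      also have "\<dots> \<le> hh (S0 + r * c - D + \<delta>)"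
        using hh_super[OF sp0 d0 d2] by (simp add: mult.commute)
      also have "S0 + r * c - D + \<delta> = S0 + c + r" unfolding \<delta>_def by simp
      finally show ?thesis unfolding sig' sig .
    qed
    finally show "per (Suc n) (\<lambda>i j. idm i j + A i j) \<le> hh (\<Sum>i<Suc n. \<Sum>j<Suc n. A i j)" .
  qed
qed



lemma per_last_row_sparse:
  assumes "\<And>b. b < N \<Longrightarrow> M N b = 0"
  shows "per (Suc N) M = M N N * per N M"
proof -
  have "per (Suc N) M = (\<Sum>b\<le>N. M N b * per N (\<lambda>i l. if l = b then M i N else M i l))"
    by (rule per_row_expand)
  also have "\<dots> = (\<Sum>b<N. M N b * per N (\<lambda>i l. if l = b then M i N else M i l))
      + M N N * per N (\<lambda>i l. if l = N then M i N else M i l)"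
    by (simp add: lessThan_Suc_atMost[symmetric])
  also have "(\<Sum>b<N. M N b * per N (\<lambda>i l. if l = b then M i N else M i l)) = 0"
    using assms by simp
  also have "per N (\<lambda>i l. if l = N then M i N else M i l) = per N M"
    by (rule per_cong) auto
  finally show ?thesis by simp
qed

lemma per_block2:
  assumes "M N N = 1" "M N (Suc N) = - x" "M (Suc N) N = - y" "M (Suc N) (Suc N) = 1"
    and "\<And>i. i < N \<Longrightarrow> M i N = 0 \<and> M i (Suc N) = 0"
    and "\<And>l. l < N \<Longrightarrow> M N l = 0 \<and> M (Suc N) l = 0"
  shows "per (Suc (Suc N)) M = (1 + x * y) * per N M"
proof -
  define F where "F b = M (Suc N) b * per (Suc N) (\<lambda>i l. if l = b then M i (Suc N) else M i l)" for b
  have "per (Suc (Suc N)) M = (\<Sum>b\<le>Suc N. F b)" unfolding F_def by (rule per_row_expand)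
  also have "\<dots> = (\<Sum>b<N. F b) + F N + F (Suc N)"
    by (simp add: lessThan_Suc_atMost[symmetric])
  also have "(\<Sum>b<N. F b) = 0" unfolding F_def using assms(6) by simp
  also have "F (Suc N) = per N M"
  proof -
    have "per (Suc N) (\<lambda>i l. if l = Suc N then M i (Suc N) else M i l) = per (Suc N) M"
      by (rule per_cong) auto
    also have "\<dots> = M N N * per N M" by (rule per_last_row_sparse) (use assms(6) in auto)
    finally show ?thesis unfolding F_def using assms(1,4) by simp
  qed
  also have "F N = x * y * per N M"
  proof -
    have "per (Suc N) (\<lambda>i l. if l = N then M i (Suc N) else M i l) =
       (\<lambda>i l. if l = N then M i (Suc N) else M i l) N N * per N (\<lambda>i l. if l = N then M i (Suc N) else M i l)"
      by (rule per_last_row_sparse) (use assms(6) in auto)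
    also have "per N (\<lambda>i l. if l = N then M i (Suc N) else M i l) = per N M"
      by (rule per_cong) auto
    finally show ?thesis unfolding F_def using assms(2,3) by simp
  qed
  finally show ?thesis by (simp add: algebra_simps)
qed

definition blk :: "(nat \<Rightarrow> real) \<Rightarrow> nat \<Rightarrow> nat \<Rightarrow> nat \<Rightarrow> real" where
  "blk w L i j = (if i < L \<and> j < L \<and> i \<noteq> j \<and> i div 2 = j div 2 then w (i div 2) else 0)"

lemma per_blk:
  "2 * P \<le> L \<Longrightarrow> per (2 * P) (\<lambda>i j. idm i j - blk w L i j) = (\<Prod>b<P. 1 + (w b)^2)"
proof (induction P)
  case 0
  then show ?case by (simp add: per_0)
next
  case (Suc P)
  define N where "N = 2 * P"
  have NL: "Suc N < L" using Suc.prems unfolding N_def by simp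
  have dN: "N div 2 = P" "Suc N div 2 = P" unfolding N_def by auto
  have "per (2 * Suc P) (\<lambda>i j. idm i j - blk w L i j) = per (Suc (Suc N)) (\<lambda>i j. idm i j - blk w L i j)"
    unfolding N_def by simp
  also have "\<dots> = (1 + w P * w P) * per N (\<lambda>i j. idm i j - blk w L i j)"
  proof (rule per_block2)
    show "idm N N - blk w L N N = 1" by (simp add: idm_def blk_def)
    show "idm N (Suc N) - blk w L N (Suc N) = - w P" using NL dN by (simp add: idm_def blk_def)
    show "idm (Suc N) N - blk w L (Suc N) N = - w P" using NL dN by (simp add: idm_def blk_def)
    show "idm (Suc N) (Suc N) - blk w L (Suc N) (Suc N) = 1" by (simp add: idm_def blk_def)
    fix i assume i: "i < N"
    hence "i div 2 < P" unfolding N_def by linarith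
    thus "idm i N - blk w L i N = 0 \<and> idm i (Suc N) - blk w L i (Suc N) = 0"
      using i dN by (auto simp: idm_def blk_def)
  next
    fix l assume l: "l < N"
    hence "l div 2 < P" unfolding N_def by linarith
    thus "idm N l - blk w L N l = 0 \<and> idm (Suc N) l - blk w L (Suc N) l = 0"
      using l dN by (auto simp: idm_def blk_def)
  qed
  also have "per N (\<lambda>i j. idm i j - blk w L i j) = (\<Prod>b<P. 1 + (w b)^2)"
    using Suc.IH Suc.prems unfolding N_def by simp
  finally show ?case by (simp add: power2_eq_square mult.commute)
qed

lemma per_blk_tail:
  fixes q L :: nat
  shows "per (L + q) (\<lambda>i j. idm i j - blk w L i j) = per L (\<lambda>i j. idm i j - blk w L i j)"
proof (induction q)
  case 0 then show ?case by simp
next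
  case (Suc q)
  have "per (Suc (L + q)) (\<lambda>i j. idm i j - blk w L i j) =
      (idm (L+q) (L+q) - blk w L (L+q) (L+q)) * per (L + q) (\<lambda>i j. idm i j - blk w L i j)"
    by (rule per_last_row_sparse) (auto simp: idm_def blk_def)
  thus ?case using Suc.IH by (simp add: idm_def blk_def)
qed

lemma pair_iff:
  fixes i j P :: nat
  assumes "i < 2 * P"
  shows "(j < 2 * P \<and> i \<noteq> j \<and> i div 2 = j div 2) \<longleftrightarrow> j = (if even i then i + 1 else i - 1)"
proof -
  define a where "a = i div 2"
  define b where "b = i mod 2"
  define c where "c = j div 2"
  define d where "d = j mod 2"
  have i: "i = 2 * a + b" unfolding a_def b_def by simp
  have j: "j = 2 * c + d" unfolding c_def d_def by simp
  have b2: "b < 2" "d < 2" unfolding b_def d_def by auto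
  have ev: "even i \<longleftrightarrow> b = 0" unfolding b_def by (simp add: even_iff_mod_2_eq_zero)
  have aP: "a < P" using assms i by linarith
  have jd: "j div 2 = c" unfolding c_def by simp
  have id: "i div 2 = a" unfolding a_def by simp
  show ?thesis
  proof (cases "b = 0")
    case True
    hence "d = 0 \<or> d = 1" using b2 by auto
    thus ?thesis unfolding jd id using True ev i j aP by (auto simp: Suc_double_not_eq_double double_not_eq_Suc_double)
  next
    case False
    hence b1: "b = 1" using b2 by simp
    hence "d = 0 \<or> d = 1" using b2 by auto
    thus ?thesis unfolding jd id using b1 ev i j aP by (auto simp: Suc_double_not_eq_double double_not_eq_Suc_double)
  qed
qed

lemma blk_row:
  assumes "L = 2 * P" "L \<le> n" "i < n"
  shows "(\<Sum>j<n. blk w L i j) = (if i < L then w (i div 2) else 0)"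
proof (cases "i < L")
  case True
  define pt where "pt = (if even i then i + 1 else i - 1)"
  have eq: "\<And>j. (j < L \<and> i \<noteq> j \<and> i div 2 = j div 2) \<longleftrightarrow> j = pt"
    using pair_iff[of i P] True assms(1) unfolding pt_def by simp
  have "(\<Sum>j<n. blk w L i j) = (\<Sum>j<n. if j = pt then w (i div 2) else 0)"
    by (rule sum.cong[OF refl]) (use eq True in \<open>auto simp: blk_def\<close>)
  also have "\<dots> = w (i div 2)"
  proof -
    have "pt < n" using eq[of pt] assms by simp
    thus ?thesis by simp
  qed
  finally show ?thesis using True by simp
next
  case False
  then show ?thesis by (simp add: blk_def)
qed

lemma blk_sym: "blk w L i j = blk w L j i"
  unfolding blk_def by auto

lemma sum_div2:
  fixes P :: nat and f :: "nat \<Rightarrow> real"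
  shows "(\<Sum>i<2 * P. f (i div 2)) = 2 * (\<Sum>b<P. f b)"
proof (induction P)
  case 0 then show ?case by simp
next
  case (Suc P)
  have "(\<Sum>i<2 * Suc P. f (i div 2)) = (\<Sum>i<2 * P. f (i div 2)) + f ((2*P) div 2) + f (Suc (2*P) div 2)"
    by simp
  also have "(2*P) div 2 = P" by simp
  also have "Suc (2*P) div 2 = P" by simp
  finally show ?case using Suc.IH by simp
qed



lemma sum_if_less:
  fixes g :: "nat \<Rightarrow> real"
  assumes "L \<le> n"
  shows "(\<Sum>i<n. if i < L then g i else 0) = (\<Sum>i<L. g i)"
proof -
  have "(\<Sum>i<n. if i < L then g i else 0) = (\<Sum>i\<in>{..<n} \<inter> {i. i < L}. g i)"
    by (simp add: sum.If_cases)
  also have "{..<n} \<inter> {i. i < L} = {..<L}" using assms by auto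
  finally show ?thesis .
qed

lemma upper_bound:
  assumes A: "A \<in> omega n k" and k: "1 \<le> k" "k \<le> n"
  shows "per n (\<lambda>i j. idm i j - A i j) \<le> hh (real (n - k + 1))"
proof -
  have ds: "doubly_substochastic n A" and sd: "sub_defect n A = int k"
    using A unfolding omega_def by auto
  have A0: "\<And>i j. i < n \<Longrightarrow> j < n \<Longrightarrow> 0 \<le> A i j" using ds unfolding doubly_substochastic_def by auto
  have Ar: "\<And>i. i < n \<Longrightarrow> (\<Sum>j<n. A i j) \<le> 1" using ds unfolding doubly_substochastic_def by auto
  have Ac: "\<And>j. j < n \<Longrightarrow> (\<Sum>i<n. A i j) \<le> 1" using ds unfolding doubly_substochastic_def by auto
  define Ao where "Ao i j = (if i = j then 0 else A i j)" for i j
  have Ao_le: "\<And>i j. i < n \<Longrightarrow> j < n \<Longrightarrow> Ao i j \<le> A i j" unfolding Ao_def using A0 by auto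
  have Ao0: "\<And>i j. i < n \<Longrightarrow> j < n \<Longrightarrow> 0 \<le> Ao i j" unfolding Ao_def using A0 by auto
  have D: "DSS0 n Ao"
    unfolding DSS0_def
  proof (intro conjI allI impI)
    fix i j assume "i < n" "j < n" thus "0 \<le> Ao i j" by (rule Ao0)
  next
    fix i assume "i < n" thus "Ao i i = 0" unfolding Ao_def by simp
  next
    fix i assume i: "i < n"
    have "(\<Sum>j<n. Ao i j) \<le> (\<Sum>j<n. A i j)" by (rule sum_mono) (use i Ao_le in auto)
    thus "(\<Sum>j<n. Ao i j) \<le> 1" using Ar[OF i] by simp
  next
    fix j assume j: "j < n"
    have "(\<Sum>i<n. Ao i j) \<le> (\<Sum>i<n. A i j)" by (rule sum_mono) (use j Ao_le in auto)
    thus "(\<Sum>i<n. Ao i j) \<le> 1" using Ac[OF j] by simp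
  qed
  have "per n (\<lambda>i j. idm i j - A i j) \<le> per n (\<lambda>i j. idm i j + Ao i j)"
  proof (rule per_abs)
    fix i j assume ij: "i < n" "j < n"
    show "\<bar>idm i j - A i j\<bar> \<le> idm i j + Ao i j"
    proof (cases "i = j")
      case True
      have "A i i \<le> (\<Sum>l<n. A i l)" by (rule member_le_sum) (use ij A0 in auto)
      hence "A i i \<le> 1" using Ar[OF ij(1)] by simp
      thus ?thesis using True A0[OF ij(1) ij(1)] by (simp add: idm_def Ao_def)
    next
      case False
      thus ?thesis using A0[OF ij] by (simp add: idm_def Ao_def)
    qed
  qed
  also have "\<dots> \<le> hh (\<Sum>i<n. \<Sum>j<n. Ao i j)" using main_ineq D by blast
  also have "\<dots> \<le> hh (real (n - k + 1))"
  proof (rule hh_mono)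
    show "0 \<le> (\<Sum>i<n. \<Sum>j<n. Ao i j)" using Ao0 by (auto intro!: sum_nonneg)
    have "(\<Sum>i<n. \<Sum>j<n. Ao i j) \<le> sigma_sum n A"
      unfolding sigma_sum_def by (intro sum_mono) (use Ao_le in auto)
    also have "sigma_sum n A < real (n - k + 1)"
    proof -
      have "\<not> \<lceil>real n - sigma_sum n A\<rceil> < int k" using sd unfolding sub_defect_def by simp
      hence "\<not> real n - sigma_sum n A \<le> real k - 1" by (simp add: ceiling_less_iff)
      thus ?thesis using k by (simp add: of_nat_diff)
    qed
    finally show "(\<Sum>i<n. \<Sum>j<n. Ao i j) \<le> real (n - k + 1)" by simp
  qed
  finally show ?thesis .
qed

lemma construction:
  fixes n k p r :: nat and t :: real
  assumes L: "2 * (p + r) \<le> n" and m: "n - k + 1 = 2 * p + r" "k \<le> n" "1 \<le> k"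
    and t: "0 \<le> t" "t < 1" "real (n - k + 1) - 1 \<le> real (n - k + 1) * t"
  defines "w \<equiv> (\<lambda>b. if b < p then t else t / 2)"
  shows "blk w (2 * (p + r)) \<in> omega n k"
    and "per n (\<lambda>i j. idm i j - blk w (2 * (p + r)) i j) = (1 + t^2)^p * (\<Prod>b\<in>{p..<p+r}. 1 + (t/2)^2)"
proof -
  define L where "L = 2 * (p + r)"
  have w0: "\<And>b. 0 \<le> w b" "\<And>b. w b \<le> 1" unfolding w_def using t by auto
  have rows: "\<And>i. i < n \<Longrightarrow> (\<Sum>j<n. blk w L i j) = (if i < L then w (i div 2) else 0)"
    using blk_row[of L "p + r" n] L unfolding L_def by simp
  have e1: "\<forall>i j. (i < n \<and> j < n \<longrightarrow> 0 \<le> blk w L i j) \<and> (\<not> (i < n \<and> j < n) \<longrightarrow> blk w L i j = 0)"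
    using w0 L unfolding L_def blk_def by auto
  have e2: "\<forall>i<n. (\<Sum>j<n. blk w L i j) \<le> 1" using rows w0 by simp
  have e3: "\<forall>j<n. (\<Sum>i<n. blk w L i j) \<le> 1"
  proof (intro allI impI)
    fix j assume "j < n"
    thus "(\<Sum>i<n. blk w L i j) \<le> 1" using rows[of j] w0 by (simp add: blk_sym[of w L _ j])
  qed
  have ds: "doubly_substochastic n (blk w L)"
    unfolding doubly_substochastic_def using e1 e2 e3 by blast
  have sig: "sigma_sum n (blk w L) = real (n - k + 1) * t"
  proof -
    have "sigma_sum n (blk w L) = (\<Sum>i<n. if i < L then w (i div 2) else 0)"
      unfolding sigma_sum_def by (rule sum.cong[OF refl]) (simp add: rows)
    also have "\<dots> = (\<Sum>i<L. w (i div 2))" using L unfolding L_def by (rule sum_if_less)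
    also have "\<dots> = 2 * (\<Sum>b<p + r. w b)" unfolding L_def by (rule sum_div2)
    also have "(\<Sum>b<p + r. w b) = (\<Sum>b<p. w b) + (\<Sum>b\<in>{p..<p+r}. w b)"
      using sum.atLeastLessThan_concat[of 0 p "p+r" w] by (simp add: atLeast0LessThan)
    also have "(\<Sum>b<p. w b) = real p * t" unfolding w_def by simp
    also have "(\<Sum>b\<in>{p..<p+r}. w b) = real r * (t/2)" unfolding w_def by simp
    finally show ?thesis unfolding m by (simp add: algebra_simps)
  qed
  have sd: "sub_defect n (blk w L) = int k"
    unfolding sub_defect_def sig
  proof (rule ceiling_unique)
    have pos: "0 < real (n - k + 1)" by simp
    have a: "real (n - k + 1) * t < real (n - k + 1)" using mult_strict_left_mono[OF t(2) pos] by simp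
    have mr: "real (n - k + 1) = real n - real k + 1" using m(2) by (simp add: of_nat_diff)
    have ik: "real_of_int (int k) = real k" by simp
    show "real_of_int (int k) - 1 < real n - real (n - k + 1) * t" using a mr ik by linarith
    show "real n - real (n - k + 1) * t \<le> real_of_int (int k)" using t(3) mr ik by linarith
  qed
  show "blk w (2 * (p + r)) \<in> omega n k" using ds sd unfolding omega_def L_def by simp
  have "per n (\<lambda>i j. idm i j - blk w L i j) = per (L + (n - L)) (\<lambda>i j. idm i j - blk w L i j)"
    using L unfolding L_def by simp
  also have "\<dots> = per L (\<lambda>i j. idm i j - blk w L i j)" by (rule per_blk_tail)
  also have "\<dots> = (\<Prod>b<p+r. 1 + (w b)^2)" unfolding L_def by (rule per_blk) simp
  also have "\<dots> = (\<Prod>b<p. 1 + (w b)^2) * (\<Prod>b\<in>{p..<p+r}. 1 + (w b)^2)"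
    using prod.atLeastLessThan_concat[of 0 p "p+r" "\<lambda>b. 1 + (w b)^2"] by (simp add: atLeast0LessThan)
  also have "(\<Prod>b<p. 1 + (w b)^2) = (1 + t^2)^p" unfolding w_def by simp
  also have "(\<Prod>b\<in>{p..<p+r}. 1 + (w b)^2) = (\<Prod>b\<in>{p..<p+r}. 1 + (t/2)^2)"
    unfolding w_def by (rule prod.cong) auto
  finally show "per n (\<lambda>i j. idm i j - blk w (2 * (p + r)) i j) = (1 + t^2)^p * (\<Prod>b\<in>{p..<p+r}. 1 + (t/2)^2)"
    unfolding L_def .
qed



theorem mainTheorem14:
  fixes n k e :: nat
  assumes "1 \<le> n" and "1 \<le> k" and "k \<le> n"
    and "even n \<or> (odd n \<and> 2 \<le> k)"
    and "even e" and "e \<le> n - k + 1" and "n - k + 1 < e + 2"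
  shows "Sup {per n (\<lambda>i j. idm i j - A i j) | A. A \<in> omega n k}
         = 2 ^ (e div 2) * (1 + ((real (n - k + 1) - real e) / 2)\<^sup>2)"
proof -
  define m where "m = n - k + 1"
  define p where "p = e div 2"
  define r where "r = m - e"
  define V where "V = 2 ^ (e div 2) * (1 + ((real (n - k + 1) - real e) / 2)\<^sup>2)"
  define S where "S = {per n (\<lambda>i j. idm i j - A i j) | A. A \<in> omega n k}"
  have ep: "e = 2 * p" unfolding p_def using assms(5) by simp
  have mpr: "m = 2 * p + r" "r \<le> 1" using assms(6,7) unfolding m_def r_def ep by auto
  have L: "2 * (p + r) \<le> n"
  proof (cases "r = 0")
    case True thus ?thesis using mpr assms(2,3) unfolding m_def by simp
  next
    case False
    hence r1: "r = 1" using mpr by simp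
    have "k \<noteq> 1"
    proof
      assume "k = 1"
      hence "n = 2 * p + 1" using mpr r1 assms(1) unfolding m_def by simp
      thus False using assms(4) \<open>k = 1\<close> by simp
    qed
    thus ?thesis using mpr r1 assms(2,3) unfolding m_def by simp
  qed
  have Vr: "V = 2 ^ p * (1 + (real r / 2)^2)"
    unfolding V_def p_def[symmetric] using mpr unfolding m_def ep by simp
  have hV: "hh (real (n - k + 1)) = V"
  proof -
    have "hh (2 * real p + real r) = 2 ^ p * (1 + (real r / 2)^2)"
      by (rule hh_eq) (use mpr in auto)
    thus ?thesis using mpr unfolding Vr m_def by simp
  qed
  define f where "f t = (1 + t^2)^p * (1 + (t/2)^2)^r" for t :: real
  have fS: "f t \<in> S" if t: "0 \<le> t" "t < 1" "real m - 1 \<le> real m * t" for t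
  proof -
    have c: "n - k + 1 = 2 * p + r" using mpr unfolding m_def by simp
    note C = construction[OF L c assms(3,2) t(1,2), unfolded m_def[symmetric], OF t(3)]
    have pr: "(\<Prod>b\<in>{p..<p+r}. 1 + (t/2)^2) = (1 + (t/2)^2)^r" by simp
    obtain A where A: "A \<in> omega n k" "per n (\<lambda>i j. idm i j - A i j) = (1 + t^2)^p * (\<Prod>b\<in>{p..<p+r}. 1 + (t/2)^2)"
      using C by blast
    have eq: "per n (\<lambda>i j. idm i j - A i j) = f t" using A(2) pr unfolding f_def by simp
    show ?thesis unfolding S_def by (rule CollectI, rule exI[of _ A]) (use A(1) eq in auto)
  qed
  have up: "\<And>x. x \<in> S \<Longrightarrow> x \<le> V"
    unfolding S_def using upper_bound[OF _ assms(2,3)] hV by auto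
  have m1: "1 \<le> m" unfolding m_def by simp
  have ev: "eventually (\<lambda>t. t \<in> {(real m - 1) / real m <..< 1}) (at_left (1::real))"
    by (rule eventually_at_left_real) (use m1 in simp)
  have ev2: "eventually (\<lambda>t. f t \<in> S) (at_left (1::real))"
  proof (rule eventually_mono[OF ev])
    fix t assume t: "t \<in> {(real m - 1) / real m <..< 1}"
    have mpos: "0 < real m" using m1 by simp
    have "0 \<le> (real m - 1) / real m" using m1 by simp
    hence t0: "0 \<le> t" using t by simp
    have "(real m - 1) / real m < t" using t by simp
    hence "real m - 1 < real m * t" using mpos by (simp add: divide_less_eq mult.commute)
    thus "f t \<in> S" using fS t0 t by simp
  qed
  have ne: "S \<noteq> {}" using eventually_happens'[OF _ ev2] by auto
  have bdd: "bdd_above S" by (rule bdd_aboveI) (rule up)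
  have lim: "(f \<longlongrightarrow> f 1) (at_left 1)" unfolding f_def by (intro tendsto_intros) auto
  have f1: "f 1 = V"
  proof (cases "r = 0")
    case True thus ?thesis unfolding f_def Vr by simp
  next
    case False
    hence "r = 1" using mpr by simp
    thus ?thesis unfolding f_def Vr by (simp add: power2_eq_square)
  qed
  have "V \<le> Sup S"
  proof (rule tendsto_upperbound[OF lim[unfolded f1]])
    show "eventually (\<lambda>t. f t \<le> Sup S) (at_left 1)"
      by (rule eventually_mono[OF ev2]) (use bdd in \<open>auto intro: cSup_upper\<close>)
  qed simp
  moreover have "Sup S \<le> V" using ne up by (rule cSup_least)
  ultimately show ?thesis unfolding S_def V_def by simp
qed


end
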